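(* Let $R>0$ and $\Omega=\{z\in\mathbb{C}:|z|<R\}\setminus(-R,-1]$. Let $K\subset\Omega$ be a compact set such that $\Omega\setminus K$ is a domain regular for the Dirichlet problem. Let $\{K_\delta\}_{\delta\in(0,1]}$ be a family of compact subsets of $\Omega\setminus K$ such that (i) $K_\delta\subset K_{\delta'}$ if and only if $\delta\le\delta'$, and (ii) $K^*:=\bigcap_{\delta\in(0,1]}K_\delta$ is a finite set. For $\delta\in(0,1]$ let $\Omega_\delta=\Omega\setminus(K\cup K_\delta)$ and $\omega_\delta(z)=\omega(z,C_R,\Omega_\delta)$, $z\in\Omega_\delta$, where $C_R=\{|z|=R\}$. Then for every $z\in\Omega^*:=\Omega\setminus(K\cup K^* )$, $$\lim_{\delta\to0^+}\omega_\delta(z)=\omega(z,C_R,\Omega\setminus K).$$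
   Context: $\omega(z,E,U)$ denotes the harmonic measure of a Borel set $E\subset\partial U$ with respect to $U$ evaluated at $z$ (the solution of the generalized Dirichlet problem with boundary data $\chi_E$); when $U$ is only an open set, one uses the component of $U$ containing $z$. *)

theory Defs
  imports "HOL-Analysis.Analysis"
begin

text \<open>Subharmonic functions in the Perron family are
  taken real-valued (for bounded boundary data this gives the same Perron solution,
  since max(u, -M) is again subharmonic).\<close>

definition usc_on :: "complex set \<Rightarrow> (complex \<Rightarrow> real) \<Rightarrow> bool" where
  "usc_on U u \<longleftrightarrow> (\<forall>z\<in>U. \<forall>c. u z < c \<longrightarrow> eventually (\<lambda>y. u y < c) (at z within U))"

definition subharmonic_on :: "complex set \<Rightarrow> (complex \<Rightarrow> real) \<Rightarrow> bool" where
  "subharmonic_on U u \<longleftrightarrow> open U \<and> usc_on U u \<and>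
     (\<forall>z\<in>U. \<exists>r0>0. cball z r0 \<subseteq> U \<and>
        (\<forall>r. 0 < r \<and> r < r0 \<longrightarrow>
           set_integrable lborel {0..2*pi} (\<lambda>t. u (z + of_real r * cis t)) \<and>
           u z \<le> (1 / (2*pi)) * (LINT t:{0..2*pi}|lborel. u (z + of_real r * cis t))))"

definition perron_family :: "complex set \<Rightarrow> (complex \<Rightarrow> real) \<Rightarrow> (complex \<Rightarrow> real) set" where
  "perron_family U f = {u. subharmonic_on U u \<and>
     (\<forall>\<zeta>\<in>frontier U. Limsup (at \<zeta> within U) (\<lambda>z. ereal (u z)) \<le> ereal (f \<zeta>))}"

definition perron :: "complex set \<Rightarrow> (complex \<Rightarrow> real) \<Rightarrow> complex \<Rightarrow> real" where
  "perron U f z = real_of_ereal (SUP u\<in>perron_family U f. ereal (u z))"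

definition dirichlet_regular_domain :: "complex set \<Rightarrow> bool" where
  "dirichlet_regular_domain U \<longleftrightarrow> open U \<and> connected U \<and> U \<noteq> {} \<and>
     (\<forall>f. continuous_on (frontier U) f \<longrightarrow>
        (\<forall>\<zeta>\<in>frontier U. (perron U f \<longlongrightarrow> f \<zeta>) (at \<zeta> within U)))"

definition harmonic_measure :: "complex \<Rightarrow> complex set \<Rightarrow> complex set \<Rightarrow> real" where
  "harmonic_measure z E U = perron (connected_component_set U z) (indicator E) z"

end

theory Submission
  imports Defs "HOL-Complex_Analysis.Complex_Analysis"
begin

lemma log_mean:
  fixes a :: complex and r :: real
  assumes r: "0 < r" "r < norm a"
  shows "set_integrable lborel {0..2*pi} (\<lambda>t. ln (norm (a + of_real r * cis t)))"
    and "(LINT t:{0..2*pi}|lborel. ln (norm (a + of_real r * cis t))) = 2*pi * ln (norm a)"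
proof -
  have a0: "a \<noteq> 0" using r by auto
  define g where "g = (\<lambda>\<xi>. Ln (\<xi> / a))"
  have nz: "a + of_real r * cis t \<noteq> 0" for t
  proof
    assume "a + of_real r * cis t = 0"
    then have "norm a = norm (of_real r * cis t)" by (metis add_eq_0_iff norm_minus_cancel)
    then show False using r by (simp add: norm_mult)
  qed
  have Re_pos: "Re (\<xi> / a) > 0" if "\<xi> \<in> cball a r" for \<xi>
  proof -
    have "norm (\<xi> / a - 1) = norm (\<xi> - a) / norm a" using a0
      by (metis (no_types, lifting) diff_divide_distrib divide_self norm_divide)
    also have "\<dots> \<le> r / norm a" using that a0
      by (simp add: dist_norm norm_minus_commute divide_right_mono)
    also have "\<dots> < 1" using r by (simp add: divide_less_eq)
    finally have "norm (\<xi> / a - 1) < 1" .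
    then have "\<bar>Re (\<xi> / a - 1)\<bar> < 1" using abs_Re_le_cmod le_less_trans by blast
    then show ?thesis by simp
  qed
  have hol: "g holomorphic_on cball a r"
    unfolding g_def
    by (intro holomorphic_on_Ln' holomorphic_intros) (use Re_pos a0 in \<open>fastforce simp: complex_nonpos_Reals_iff\<close>)+
  have "((\<lambda>u. g u/(u-a)) has_contour_integral (2 * of_real pi * \<i> * g a)) (circlepath a r)"
    by (rule Cauchy_integral_circlepath_simple[OF hol]) (use r in simp)
  then have "((\<lambda>t. g (a + r * cis t) / (a + r * cis t - a) * r * \<i> * cis t) has_integral 0) {0..2*pi}"
    unfolding circlepath_def using a0
    by (subst (asm) has_contour_integral_part_circlepath_iff) (auto simp: g_def)
  moreover have "g (a + r * cis t) / (a + r * cis t - a) * r * \<i> * cis t = \<i> * g (a + r * cis t)" for t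
    using r by (simp add: field_simps cis_neq_zero)
  ultimately have "((\<lambda>t. \<i> * g (a + r * cis t)) has_integral 0) {0..2*pi}"
    by (metis (no_types, lifting) has_integral_cong)
  then have "((\<lambda>t. (-\<i>) * (\<i> * g (a + r * cis t))) has_integral (-\<i>) * 0) {0..2*pi}"
    by (rule has_integral_mult_right)
  then have "((\<lambda>t. g (a + r * cis t)) has_integral 0) {0..2*pi}" by simp
  then have "((\<lambda>t. Re (g (a + r * cis t))) has_integral Re 0) {0..2*pi}"
    using has_integral_Re by blast
  moreover have "Re (g (a + r * cis t)) = ln (norm (a + of_real r * cis t)) - ln (norm a)" for t
    using nz[of t] a0 by (simp add: g_def norm_divide ln_div)
  ultimately have I1: "((\<lambda>t. ln (norm (a + of_real r * cis t)) - ln (norm a)) has_integral 0) {0..2*pi}"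
    by simp
  have I2: "((\<lambda>t. ln (norm a)) has_integral 2*pi * ln (norm a)) {0..2*pi}"
    using has_integral_const_real[of "ln (norm a)" 0 "2*pi"] by simp
  have I: "((\<lambda>t. ln (norm (a + of_real r * cis t))) has_integral 2*pi * ln (norm a)) {0..2*pi}"
    using has_integral_add[OF I1 I2] by simp
  have cont: "continuous_on {0..2*pi} (\<lambda>t. ln (norm (a + of_real r * cis t)))"
    by (intro continuous_intros) (use nz in auto)
  show si: "set_integrable lborel {0..2*pi} (\<lambda>t. ln (norm (a + of_real r * cis t)))"
    by (rule borel_integrable_atLeastAtMost'[OF cont])
  show "(LINT t:{0..2*pi}|lborel. ln (norm (a + of_real r * cis t))) = 2*pi * ln (norm a)"
    using set_borel_integral_eq_integral(2)[OF si] I by (simp add: integral_unique)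
qed

lemma usc_nhd:
  assumes "usc_on U u" "x \<in> U" "u x < c"
  shows "\<exists>d>0. \<forall>y\<in>U. dist y x < d \<longrightarrow> u y < c"
proof -
  have "eventually (\<lambda>y. u y < c) (at x within U)"
    using assms unfolding usc_on_def by blast
  then obtain d where d: "d > 0" "\<forall>y\<in>U. y \<noteq> x \<and> dist y x < d \<longrightarrow> u y < c"
    unfolding eventually_at by blast
  then show ?thesis using assms(3) by (metis)
qed

lemma usc_circle_measurable:
  assumes "usc_on U u" "\<And>t. x + of_real r * cis t \<in> U"
  shows "(\<lambda>t. u (x + of_real r * cis t)) \<in> borel_measurable lborel"
proof (subst borel_measurable_iff_less, intro allI)
  fix a
  let ?g = "\<lambda>t. u (x + of_real r * cis t)"
  have "open {t. ?g t < a}"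
  proof (subst open_dist, intro ballI)
    fix t assume "t \<in> {t. ?g t < a}"
    then obtain d where d: "d > 0" "\<forall>y\<in>U. dist y (x + of_real r * cis t) < d \<longrightarrow> u y < a"
      using usc_nhd[OF assms(1) assms(2)[of t]] by auto
    have "isCont (\<lambda>s. x + of_real r * cis s) t" unfolding cis_conv_exp by (intro continuous_intros)
    then obtain e where e: "e > 0" "\<forall>s. dist s t < e \<longrightarrow> dist (x + of_real r * cis s) (x + of_real r * cis t) < d"
      using d(1) unfolding continuous_at_eps_delta by blast
    show "\<exists>e>0. \<forall>y. dist y t < e \<longrightarrow> y \<in> {t. ?g t < a}"
      using e d assms(2) by auto
  qed
  then show "{w \<in> space lborel. ?g w < a} \<in> sets lborel" by auto
qed

lemma bounded_circle_integrable:
  fixes g :: "real \<Rightarrow> real"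
  assumes "g \<in> borel_measurable lborel" "\<And>t. \<bar>g t\<bar> \<le> B"
  shows "set_integrable lborel {0..2*pi} g"
  unfolding set_integrable_def
  by (rule integrableI_bounded_set_indicator[where B=B]) (use assms in auto)

lemma circle_mean_max:
  assumes usc: "usc_on U u" and le: "\<forall>y\<in>U. u y \<le> m" and wm: "u w = m" and r: "0 < r"
    and circ: "\<And>t. w + of_real r * cis t \<in> U"
    and int: "set_integrable lborel {0..2*pi} (\<lambda>t. u (w + of_real r * cis t))"
    and mean: "u w \<le> (1 / (2*pi)) * (LINT t:{0..2*pi}|lborel. u (w + of_real r * cis t))"
    and w': "w' \<in> U" "norm (w' - w) = r"
  shows "u w' = m"
proof (rule ccontr)
  assume "u w' \<noteq> m"
  then have lt: "u w' < m" using le w' by force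
  define c where "c = (u w' + m) / 2"
  have c: "u w' < c" "c < m" using lt by (auto simp: c_def)
  obtain d where d: "d > 0" "\<forall>y\<in>U. dist y w' < d \<longrightarrow> u y < c"
    using usc_nhd[OF usc w'(1) c(1)] by auto
  define t0 where "t0 = Arg2pi (w' - w)"
  have t0: "0 \<le> t0" "t0 < 2*pi" using Arg2pi_ge_0 Arg2pi_lt_2pi t0_def by auto
  have wt0: "w + of_real r * cis t0 = w'"
    using Arg2pi_eq[of "w' - w"] w'(2) by (simp add: t0_def cis_conv_exp)
  have "isCont (\<lambda>s. w + of_real r * cis s) t0" unfolding cis_conv_exp by (intro continuous_intros)
  then obtain e where e: "e > 0" "\<forall>s. dist s t0 < e \<longrightarrow> dist (w + of_real r * cis s) (w + of_real r * cis t0) < d"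
    using d(1) unfolding continuous_at_eps_delta by blast
  define e' where "e' = min (e/2) (2*pi - t0)"
  have e': "0 < e'" "e' < e" "t0 + e' \<le> 2*pi" using e t0 by (auto simp: e'_def)
  define J where "J = {t0..t0+e'}"
  have J: "J \<subseteq> {0..2*pi}" using t0 e' by (auto simp: J_def)
  have uJ: "u (w + of_real r * cis s) < c" if "s \<in> J" for s
  proof -
    have "dist s t0 < e" using that e' by (auto simp: J_def dist_real_def)
    then show ?thesis using e(2) d(2) circ wt0 by auto
  qed
  define f2 where "f2 = (\<lambda>t. m - (m - c) * indicator J t)"
  have f2m: "f2 \<in> borel_measurable lborel" unfolding f2_def J_def by measurable
  have f2i: "set_integrable lborel {0..2*pi} f2"
    by (rule bounded_circle_integrable[OF f2m, where B="\<bar>m\<bar> + \<bar>m - c\<bar>"])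
       (auto simp: f2_def indicator_def)
  have le2: "u (w + of_real r * cis t) \<le> f2 t" if "t \<in> {0..2*pi}" for t
    using uJ[of t] le circ c by (cases "t \<in> J") (auto simp: f2_def intro: less_imp_le)
  have I1: "(LINT t:{0..2*pi}|lborel. u (w + of_real r * cis t)) \<le> (LINT t:{0..2*pi}|lborel. f2 t)"
    by (rule set_integral_mono[OF int f2i le2])
  have ci: "set_integrable lborel {0..2*pi} (\<lambda>t. m)"
    by (rule bounded_circle_integrable[where B="\<bar>m\<bar>"]) auto
  have ii: "set_integrable lborel {0..2*pi} (\<lambda>t. (m - c) * indicator J t)"
    by (rule bounded_circle_integrable[where B="\<bar>m - c\<bar>"]) (auto simp: indicator_def J_def)
  have "(LINT t:{0..2*pi}|lborel. (indicator J t :: real)) = measure lborel J"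
  proof -
    have "(LINT t:{0..2*pi}|lborel. (indicator J t :: real)) = (\<integral>t. indicator J t \<partial>lborel)"
      unfolding set_lebesgue_integral_def using J
      by (intro Bochner_Integration.integral_cong) (auto simp: indicator_def)
    also have "\<dots> = measure lborel J" by (simp add: J_def)
    finally show ?thesis .
  qed
  also have "measure lborel J = e'" using e' by (simp add: J_def)
  finally have IJ: "(LINT t:{0..2*pi}|lborel. (indicator J t :: real)) = e'" .
  have "(LINT t:{0..2*pi}|lborel. f2 t) = (LINT t:{0..2*pi}|lborel. m) - (LINT t:{0..2*pi}|lborel. (m - c) * indicator J t)"
    unfolding f2_def by (rule set_integral_diff(2)[OF ci ii])
  also have "\<dots> = 2*pi*m - (m - c) * e'"
    using IJ by (simp add: set_integral_const)
  finally have I2: "(LINT t:{0..2*pi}|lborel. f2 t) = 2*pi*m - (m - c) * e'" .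
  have "m \<le> (1 / (2*pi)) * (2*pi*m - (m - c) * e')"
    using mean wm I1 I2 by (smt (verit, del_insts) divide_pos_pos mult_left_mono pi_gt_zero)
  also have "\<dots> < m" using c e' by (simp add: field_simps)
  finally show False by simp
qed

lemma frontier_nhd:
  assumes "\<zeta> \<in> frontier U" "open U" "Limsup (at \<zeta> within U) (\<lambda>z. ereal (u z)) \<le> ereal M" "M < c"
  shows "\<exists>d>0. \<forall>y\<in>U. dist y \<zeta> < d \<longrightarrow> u y < c"
proof -
  have "ereal M < ereal c" using assms(4) by simp
  then have "ereal c > Limsup (at \<zeta> within U) (\<lambda>z. ereal (u z))" using assms(3) by (rule le_less_trans[rotated])
  then have "eventually (\<lambda>z. ereal (u z) < ereal c) (at \<zeta> within U)" by (rule Limsup_lessD)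
  then obtain d where d: "d > 0" "\<forall>y\<in>U. y \<noteq> \<zeta> \<and> dist y \<zeta> < d \<longrightarrow> ereal (u y) < ereal c"
    unfolding eventually_at by blast
  have "\<zeta> \<notin> U" using assms(1,2) by (simp add: frontier_def interior_open)
  then have "\<forall>y\<in>U. dist y \<zeta> < d \<longrightarrow> u y < c" using d(2) by force
  then show ?thesis using d(1) by blast
qed

lemma seq_contra:
  fixes u :: "'a::metric_space \<Rightarrow> real" and b :: "nat \<Rightarrow> real"
  assumes "ys \<longlonglongrightarrow> x" "\<forall>n. ys n \<in> U" "\<forall>y\<in>U. dist y x < d \<longrightarrow> u y < c" "d > 0"
    and "\<forall>n. u (ys n) \<ge> b n" "b \<longlonglongrightarrow> B" "c < B"
  shows False
proof -
  have "eventually (\<lambda>n. dist (ys n) x < d) sequentially"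
    using tendsto_iff[THEN iffD1, OF assms(1), rule_format, OF assms(4)] .
  moreover have "eventually (\<lambda>n. b n > c) sequentially"
    using order_tendstoD(1)[OF assms(6,7)] .
  ultimately have "eventually (\<lambda>n. dist (ys n) x < d \<and> b n > c) sequentially"
    by (rule eventually_conj)
  then obtain N where "\<forall>n\<ge>N. dist (ys n) x < d \<and> b n > c" unfolding eventually_sequentially by blast
  then have "dist (ys N) x < d" "b N > c" by auto
  moreover have "u (ys N) < c" using assms(2,3) calculation(1) by blast
  ultimately show False using assms(5) by (meson less_le_trans not_less_iff_gr_or_eq order.asym)
qed

lemma max_principle:
  assumes U: "open U" "bounded U" and sh: "subharmonic_on U u"
    and bd: "\<forall>\<zeta>\<in>frontier U. Limsup (at \<zeta> within U) (\<lambda>z. ereal (u z)) \<le> ereal M"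
  shows "\<forall>x\<in>U. u x \<le> M"
proof (rule ccontr)
  assume "\<not> (\<forall>x\<in>U. u x \<le> M)"
  then obtain x0 where x0: "x0 \<in> U" "u x0 > M" by auto
  have usc: "usc_on U u" using sh by (simp add: subharmonic_on_def)
  have cpt: "compact (closure U)" using U by (simp add: compact_closure)
  have nhd: "\<exists>d>0. \<forall>y\<in>U. dist y x < d \<longrightarrow> u y < c"
    if "x \<in> closure U" "x \<in> U \<Longrightarrow> u x < c" "M < c" for x c
  proof (cases "x \<in> U")
    case True then show ?thesis using usc_nhd[OF usc True] that by auto
  next
    case False
    then have "x \<in> frontier U" using that(1) by (simp add: frontier_def interior_open U)
    then show ?thesis using frontier_nhd[OF _ U(1) _ that(3)] bd by auto
  qed
  have subseq: "\<exists>x r. x \<in> closure U \<and> strict_mono r \<and> (xs \<circ> r) \<longlonglongrightarrow> x" if "\<forall>n. xs n \<in> U" for xs :: "nat \<Rightarrow> complex"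
  proof -
    have "\<forall>n. xs n \<in> closure U" using that closure_subset by blast
    obtain l r where "l \<in> closure U" "strict_mono r" "(xs \<circ> r) \<longlonglongrightarrow> l"
      using seq_compactE[of "closure U" xs] compact_imp_seq_compact[OF cpt] \<open>\<forall>n. xs n \<in> closure U\<close> by blast
    then show ?thesis by blast
  qed
  have bdd: "bdd_above (u ` U)"
  proof (rule ccontr)
    assume nb: "\<not> bdd_above (u ` U)"
    have "\<exists>x. x \<in> U \<and> u x > real n" for n
    proof -
      from nb obtain y where "y \<in> u ` U" "\<not> y \<le> real n" unfolding bdd_above_def by blast
      then show ?thesis by auto
    qed
    then obtain xs where xs: "\<And>n. xs n \<in> U \<and> u (xs n) > real n" by metis
    then have xsU: "\<forall>n. xs n \<in> U" by blast
    obtain x r where xr: "x \<in> closure U" "strict_mono r" "(xs \<circ> r) \<longlonglongrightarrow> x"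
      using subseq[OF xsU] by blast
    define c where "c = (if x \<in> U then max (u x) M + 1 else M + 1)"
    have "x \<in> U \<Longrightarrow> u x < c" "M < c" by (auto simp: c_def)
    then obtain d where d: "d > 0" "\<forall>y\<in>U. dist y x < d \<longrightarrow> u y < c"
      using nhd[OF xr(1), of c] by blast
    show False
    proof (rule seq_contra[OF xr(3), of U d u c "\<lambda>n. min (real n) (c+1)"])
      show "\<forall>n. (xs \<circ> r) n \<in> U" using xs by simp
      show "\<forall>n. min (real n) (c+1) \<le> u ((xs \<circ> r) n)"
      proof
        fix n
        have "real n \<le> real (r n)" using seq_suble[OF xr(2)] by simp
        then show "min (real n) (c+1) \<le> u ((xs \<circ> r) n)" using xs[of "r n"]
          by (simp add: min_le_iff_disj)
      qed
      have "eventually (\<lambda>n. min (real n) (c+1) = c+1) sequentially"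
        unfolding eventually_sequentially
      proof (intro exI allI impI)
        fix n assume "nat \<lceil>c+1\<rceil> \<le> n"
        then have "real (nat \<lceil>c+1\<rceil>) \<le> real n" by linarith
        moreover have "c + 1 \<le> real (nat \<lceil>c+1\<rceil>)" by (rule real_nat_ceiling_ge)
        ultimately show "min (real n) (c+1) = c+1" by linarith
      qed
      then show "(\<lambda>n. min (real n) (c+1)) \<longlonglongrightarrow> c + 1" by (rule tendsto_eventually)
    qed (use d in auto)
  qed
  define m where "m = Sup (u ` U)"
  have um: "\<forall>y\<in>U. u y \<le> m" using bdd by (simp add: m_def cSUP_upper)
  have mM: "M < m" using x0 um by force
  have Une: "U \<noteq> {}" using x0 by auto
  have "\<exists>x. x \<in> U \<and> u x > m - 1 / (real n + 1)" for n
  proof -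
    have "m - 1 / (real n + 1) < m" by simp
    then show ?thesis unfolding m_def using less_cSUP_iff[OF Une bdd] by blast
  qed
  then obtain xs where xs: "\<And>n. xs n \<in> U \<and> u (xs n) > m - 1 / (real n + 1)" by metis
  then have xsU: "\<forall>n. xs n \<in> U" by blast
  obtain xst r where xr: "xst \<in> closure U" "strict_mono r" "(xs \<circ> r) \<longlonglongrightarrow> xst"
    using subseq[OF xsU] by blast
  have xst: "xst \<in> U \<and> u xst = m"
  proof (rule ccontr)
    assume nx: "\<not> (xst \<in> U \<and> u xst = m)"
    define c where "c = (if xst \<in> U then (max (u xst) M + m) / 2 else (M + m) / 2)"
    have "xst \<in> U \<Longrightarrow> u xst < m" using nx um by force
    then have cc: "xst \<in> U \<Longrightarrow> u xst < c" "M < c" "c < m" using mM by (auto simp: c_def)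
    then obtain d where d: "d > 0" "\<forall>y\<in>U. dist y xst < d \<longrightarrow> u y < c"
      using nhd[OF xr(1), of c] by blast
    show False
    proof (rule seq_contra[OF xr(3), of U d u c "\<lambda>n. m - 1 / (real n + 1)"])
      show "\<forall>n. (xs \<circ> r) n \<in> U" using xs by simp
      show "\<forall>n. m - 1 / (real n + 1) \<le> u ((xs \<circ> r) n)"
      proof
        fix n
        have "real n \<le> real (r n)" using seq_suble[OF xr(2)] by simp
        then have "1 / (real (r n) + 1) \<le> 1 / (real n + 1)" by (simp add: frac_le)
        then show "m - 1 / (real n + 1) \<le> u ((xs \<circ> r) n)" using xs[of "r n"] by simp
      qed
      have "(\<lambda>n. 1 / real (Suc n)) \<longlonglongrightarrow> 0" using LIMSEQ_Suc[OF lim_1_over_n] by simp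
      then have "(\<lambda>n. 1 / (real n + 1)) \<longlonglongrightarrow> 0" by (simp add: add.commute)
      then show "(\<lambda>n. m - 1 / (real n + 1)) \<longlonglongrightarrow> m" using tendsto_diff[of "\<lambda>_. m" m sequentially] by force
    qed (use d cc in auto)
  qed
  define A where "A = {y \<in> U. u y = m}"
  have Aopen: "open A"
  proof (subst open_contains_ball, intro ballI)
    fix w assume wA: "w \<in> A"
    then have wU: "w \<in> U" and wm: "u w = m" by (auto simp: A_def)
    obtain r0 where r0: "r0 > 0" "cball w r0 \<subseteq> U"
      "\<forall>r. 0 < r \<and> r < r0 \<longrightarrow> set_integrable lborel {0..2*pi} (\<lambda>t. u (w + of_real r * cis t)) \<and>
           u w \<le> (1 / (2*pi)) * (LINT t:{0..2*pi}|lborel. u (w + of_real r * cis t))"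
      using sh wU unfolding subharmonic_on_def by blast
    have "ball w r0 \<subseteq> A"
    proof
      fix y assume y: "y \<in> ball w r0"
      show "y \<in> A"
      proof (cases "y = w")
        case True then show ?thesis using wA by simp
      next
        case False
        define r where "r = norm (y - w)"
        have r: "0 < r" "r < r0" using False y by (auto simp: r_def dist_norm norm_minus_commute)
        have circ: "w + of_real r * cis t \<in> U" for t
          using r r0(2) by (auto simp: dist_norm norm_mult)
        have yU: "y \<in> U" using y r0(2) by auto
        have "u y = m"
          by (rule circle_mean_max[OF usc um wm r(1) circ _ _ yU]) (use r0(3) r in \<open>auto simp: r_def\<close>)
        then show ?thesis using yU by (simp add: A_def)
      qed
    qed
    then show "\<exists>e>0. ball w e \<subseteq> A" using r0(1) by blast
  qed
  have AU: "A \<subseteq> U" by (auto simp: A_def)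
  have "A \<noteq> {}" using xst by (auto simp: A_def)
  moreover have "A \<noteq> UNIV" using AU U(2) bounded_subset not_bounded_UNIV by metis
  ultimately obtain \<zeta> where \<zeta>: "\<zeta> \<in> frontier A" using frontier_not_empty by blast
  then have \<zeta>cl: "\<zeta> \<in> closure A" and \<zeta>nA: "\<zeta> \<notin> A" using Aopen by (auto simp: frontier_def interior_open)
  obtain c d where cd: "c < m" "d > 0" "\<forall>y\<in>U. dist y \<zeta> < d \<longrightarrow> u y < c"
  proof (cases "\<zeta> \<in> U")
    case True
    then have "u \<zeta> < m" using \<zeta>nA um by (force simp: A_def)
    then have "u \<zeta> < (u \<zeta> + m)/2" "(u \<zeta> + m)/2 < m" by auto
    then show ?thesis using usc_nhd[OF usc True] that by blast
  next
    case False
    have "\<zeta> \<in> closure U" using \<zeta>cl AU closure_mono by blast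
    then have "\<zeta> \<in> frontier U" using False by (simp add: frontier_def interior_open U)
    moreover have "M < (M + m)/2" "(M + m)/2 < m" using mM by auto
    ultimately show ?thesis using frontier_nhd[OF _ U(1)] bd that by blast
  qed
  obtain y where "y \<in> A" "dist y \<zeta> < d" using \<zeta>cl cd(2) closure_approachable by blast
  then show False using cd AU by (auto simp: A_def)
qed

lemma zero_subharmonic:
  assumes "open U" shows "subharmonic_on U (\<lambda>_. 0)"
  unfolding subharmonic_on_def usc_on_def
proof (intro conjI ballI allI impI)
  fix z assume "z \<in> U"
  then obtain r0 where "r0 > 0" "cball z r0 \<subseteq> U" using assms open_contains_cball by blast
  then show "\<exists>r0>0. cball z r0 \<subseteq> U \<and> (\<forall>r. 0 < r \<and> r < r0 \<longrightarrow>
      set_integrable lborel {0..2*pi} (\<lambda>t. 0::real) \<and> (0::real) \<le> 1 / (2*pi) * (LINT t:{0..2*pi}|lborel. 0))"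
    by (auto simp: set_integrable_def)
qed (use assms in auto)

lemma zero_in_family:
  assumes "open U" "\<And>\<zeta>. 0 \<le> f \<zeta>"
  shows "(\<lambda>_. 0) \<in> perron_family U f"
  unfolding perron_family_def
proof (intro CollectI conjI zero_subharmonic assms ballI)
  fix \<zeta>
  show "Limsup (at \<zeta> within U) (\<lambda>z. ereal 0) \<le> ereal (f \<zeta>)"
    unfolding Limsup_le_iff
  proof (intro allI impI always_eventually)
    fix y :: ereal assume "ereal (f \<zeta>) < y"
    moreover have "ereal 0 \<le> ereal (f \<zeta>)" using assms(2)[of \<zeta>] by simp
    ultimately show "ereal 0 < y" using le_less_trans by blast
  qed
qed

lemma family_le1:
  assumes "open U" "bounded U" "\<forall>\<zeta>\<in>frontier U. f \<zeta> \<le> 1" "u \<in> perron_family U f"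
  shows "\<forall>x\<in>U. u x \<le> 1"
proof (rule max_principle[OF assms(1,2)])
  show "subharmonic_on U u" using assms(4) by (simp add: perron_family_def)
  show "\<forall>\<zeta>\<in>frontier U. Limsup (at \<zeta> within U) (\<lambda>z. ereal (u z)) \<le> ereal 1"
    using assms(3,4) unfolding perron_family_def by (auto intro: order_trans)
qed

lemma perron_props:
  assumes "open U" "bounded U" "\<And>\<zeta>. 0 \<le> f \<zeta>" "\<forall>\<zeta>\<in>frontier U. f \<zeta> \<le> 1" "x \<in> U"
  shows "\<And>u. u \<in> perron_family U f \<Longrightarrow> u x \<le> perron U f x"
    and "\<And>e. e > 0 \<Longrightarrow> \<exists>u\<in>perron_family U f. u x > perron U f x - e"
proof -
  define S where "S = (SUP u\<in>perron_family U f. ereal (u x))"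
  have S0: "ereal 0 \<le> S" unfolding S_def
    using zero_in_family[OF assms(1,3)] by (rule SUP_upper2) simp
  have S1: "S \<le> ereal 1" unfolding S_def
    using family_le1[OF assms(1,2,4)] assms(5) by (auto intro!: SUP_least)
  have SS: "ereal (perron U f x) = S"
  proof -
    have "S \<noteq> \<infinity>" "S \<noteq> -\<infinity>" using S0 S1 by auto
    then have "\<bar>S\<bar> \<noteq> \<infinity>" by auto
    then show ?thesis unfolding perron_def S_def[symmetric] by (rule ereal_real')
  qed
  show "u x \<le> perron U f x" if "u \<in> perron_family U f" for u
  proof -
    have "ereal (u x) \<le> S" unfolding S_def using that by (rule SUP_upper)
    then show ?thesis using SS by (metis ereal_less_eq(3))
  qed
  show "\<exists>u\<in>perron_family U f. u x > perron U f x - e" if "e > 0" for e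
  proof -
    have "ereal (perron U f x - e) < S" using that by (simp flip: SS)
    then show ?thesis unfolding S_def less_SUP_iff by auto
  qed
qed

lemma circle_integrable_bounded:
  assumes "usc_on U w" "\<And>t. x + of_real r * cis t \<in> U" "\<forall>y\<in>U. 0 \<le> w y \<and> w y \<le> 1"
  shows "set_integrable lborel {0..2*pi} (\<lambda>t. w (x + of_real r * cis t))"
  by (rule bounded_circle_integrable[OF usc_circle_measurable[OF assms(1,2)], where B=1])
     (use assms(2,3) in force)

lemma glue_ev:
  fixes u :: "complex \<Rightarrow> real"
  assumes "z \<notin> V" "c > 0" "z \<in> closure V \<Longrightarrow> eventually (\<lambda>y. u y < c) (at z within V)"
  shows "eventually (\<lambda>y. (if y \<in> V then max (u y) 0 else 0) < c) (at z within U)"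
proof (cases "z \<in> closure V")
  case True
  then have "eventually (\<lambda>y. y \<noteq> z \<longrightarrow> y \<in> V \<longrightarrow> u y < c) (nhds z)"
    using assms(3) unfolding eventually_at_filter by blast
  then have "eventually (\<lambda>y. y \<noteq> z \<longrightarrow> y \<in> U \<longrightarrow> (if y \<in> V then max (u y) 0 else 0) < c) (nhds z)"
    by eventually_elim (use assms(2) in auto)
  then show ?thesis unfolding eventually_at_filter .
next
  case False
  have "eventually (\<lambda>y. y \<in> - closure V) (nhds z)"
    using False by (intro eventually_nhds_in_open) auto
  then have "eventually (\<lambda>y. (if y \<in> V then max (u y) 0 else 0) < c) (nhds z)"
    by eventually_elim (use assms(2) closure_subset in auto)
  then show ?thesis unfolding eventually_at_filter by (auto elim: eventually_mono)
qed

lemma glue: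
  assumes V: "open V" "bounded V" and U: "open U" and VU: "V \<subseteq> U"
    and f0: "\<And>\<zeta>. 0 \<le> f \<zeta>" and f1: "\<forall>\<zeta>\<in>frontier V. f \<zeta> \<le> 1"
    and fU: "\<forall>\<zeta>\<in>frontier V \<inter> U. f \<zeta> = 0"
    and u: "u \<in> perron_family V f"
  shows "(\<lambda>y. if y \<in> V then max (u y) 0 else 0) \<in> perron_family U f"
proof -
  define w where "w = (\<lambda>y. if y \<in> V then max (u y) 0 else 0)"
  have shu: "subharmonic_on V u" and bu: "\<forall>\<zeta>\<in>frontier V. Limsup (at \<zeta> within V) (\<lambda>z. ereal (u z)) \<le> ereal (f \<zeta>)"
    using u by (auto simp: perron_family_def)
  have uscu: "usc_on V u" using shu by (simp add: subharmonic_on_def)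
  have u1: "\<forall>x\<in>V. u x \<le> 1" using family_le1[OF V f1 u] .
  have w01: "\<forall>y. 0 \<le> w y \<and> w y \<le> 1" using u1 by (auto simp: w_def)
  have evV: "eventually (\<lambda>y. u y < c) (at z within V)" if "z \<in> frontier V" "ereal (f z) < ereal c" for z c
    using Limsup_lessD[OF le_less_trans[OF bu[rule_format, OF that(1)] that(2)]] by simp
  have uscw: "usc_on U w"
    unfolding usc_on_def
  proof (intro ballI allI impI)
    fix z c assume zU: "z \<in> U" and wc: "w z < c"
    show "eventually (\<lambda>y. w y < c) (at z within U)"
    proof (cases "z \<in> V")
      case True
      then have "u z < c" "0 < c" using wc by (auto simp: w_def)
      then have "eventually (\<lambda>y. u y < c) (at z within V)" using uscu True unfolding usc_on_def by blast
      then have "eventually (\<lambda>y. u y < c) (at z)" using at_within_open[OF True V(1)] by simp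
      moreover have "eventually (\<lambda>y. y \<in> V) (at z)" using eventually_at_in_open'[OF V(1) True] .
      ultimately have "eventually (\<lambda>y. w y < c) (at z)"
        by eventually_elim (use \<open>0 < c\<close> in \<open>auto simp: w_def\<close>)
      then show ?thesis using at_within_open[OF zU U] by simp
    next
      case False
      have c0: "0 < c" using wc False by (simp add: w_def)
      show ?thesis unfolding w_def
      proof (rule glue_ev[OF False c0])
        assume "z \<in> closure V"
        then have "z \<in> frontier V" using False V(1) by (simp add: frontier_def interior_open)
        then show "eventually (\<lambda>y. u y < c) (at z within V)"
          using evV fU zU c0 by auto
      qed
    qed
  qed
  have shw: "subharmonic_on U w"
    unfolding subharmonic_on_def
  proof (intro conjI U uscw ballI)
    fix z assume zU: "z \<in> U"
    show "\<exists>r0>0. cball z r0 \<subseteq> U \<and> (\<forall>r. 0 < r \<and> r < r0 \<longrightarrow>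
           set_integrable lborel {0..2*pi} (\<lambda>t. w (z + of_real r * cis t)) \<and>
           w z \<le> (1 / (2*pi)) * (LINT t:{0..2*pi}|lborel. w (z + of_real r * cis t)))"
    proof (cases "z \<in> V")
      case True
      obtain r0 where r0: "r0 > 0" "cball z r0 \<subseteq> V"
        "\<forall>r. 0 < r \<and> r < r0 \<longrightarrow> set_integrable lborel {0..2*pi} (\<lambda>t. u (z + of_real r * cis t)) \<and>
           u z \<le> (1 / (2*pi)) * (LINT t:{0..2*pi}|lborel. u (z + of_real r * cis t))"
        using shu True unfolding subharmonic_on_def by blast
      have "cball z r0 \<subseteq> U" using r0(2) VU by blast
      moreover have "set_integrable lborel {0..2*pi} (\<lambda>t. w (z + of_real r * cis t)) \<and>
           w z \<le> (1 / (2*pi)) * (LINT t:{0..2*pi}|lborel. w (z + of_real r * cis t))"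
        if r: "0 < r" "r < r0" for r
      proof -
        have circ: "z + of_real r * cis t \<in> V" for t
          using r r0(2) by (auto simp: dist_norm norm_mult)
        have wi: "set_integrable lborel {0..2*pi} (\<lambda>t. w (z + of_real r * cis t))"
          by (rule circle_integrable_bounded[OF uscw]) (use circ VU w01 in auto)
        have ui: "set_integrable lborel {0..2*pi} (\<lambda>t. u (z + of_real r * cis t))"
          and um: "u z \<le> (1 / (2*pi)) * (LINT t:{0..2*pi}|lborel. u (z + of_real r * cis t))"
          using r0(3) r by auto
        have "(LINT t:{0..2*pi}|lborel. u (z + of_real r * cis t)) \<le> (LINT t:{0..2*pi}|lborel. w (z + of_real r * cis t))"
          by (rule set_integral_mono[OF ui wi]) (use circ in \<open>auto simp: w_def\<close>)
        then have A: "u z \<le> (1 / (2*pi)) * (LINT t:{0..2*pi}|lborel. w (z + of_real r * cis t))"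
          using um by (smt (verit, ccfv_SIG) divide_pos_pos mult_left_mono pi_gt_zero)
        have "(LINT t:{0..2*pi}|lborel. (0::real)) \<le> (LINT t:{0..2*pi}|lborel. w (z + of_real r * cis t))"
          by (rule set_integral_mono[OF _ wi]) (use w01 in \<open>auto simp: set_integrable_def\<close>)
        then have B: "0 \<le> (1 / (2*pi)) * (LINT t:{0..2*pi}|lborel. w (z + of_real r * cis t))"
          by simp
        show ?thesis using wi A B True by (simp add: w_def)
      qed
      ultimately show ?thesis using r0(1) by blast
    next
      case False
      obtain r0 where r0: "r0 > 0" "cball z r0 \<subseteq> U" using U zU open_contains_cball by blast
      moreover have "set_integrable lborel {0..2*pi} (\<lambda>t. w (z + of_real r * cis t)) \<and>
           w z \<le> (1 / (2*pi)) * (LINT t:{0..2*pi}|lborel. w (z + of_real r * cis t))"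
        if r: "0 < r" "r < r0" for r
      proof -
        have circ: "z + of_real r * cis t \<in> U" for t
          using r r0(2) by (auto simp: dist_norm norm_mult)
        have wi: "set_integrable lborel {0..2*pi} (\<lambda>t. w (z + of_real r * cis t))"
          by (rule circle_integrable_bounded[OF uscw]) (use circ w01 in auto)
        have "(LINT t:{0..2*pi}|lborel. (0::real)) \<le> (LINT t:{0..2*pi}|lborel. w (z + of_real r * cis t))"
          by (rule set_integral_mono[OF _ wi]) (use w01 in \<open>auto simp: set_integrable_def\<close>)
        then have B: "0 \<le> (1 / (2*pi)) * (LINT t:{0..2*pi}|lborel. w (z + of_real r * cis t))"
          by simp
        show ?thesis using wi B False by (simp add: w_def)
      qed
      ultimately show ?thesis by blast
    qed
  qed
  have bw: "Limsup (at \<zeta> within U) (\<lambda>z. ereal (w z)) \<le> ereal (f \<zeta>)" if \<zeta>: "\<zeta> \<in> frontier U" for \<zeta>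
    unfolding Limsup_le_iff
  proof (intro allI impI)
    fix y :: ereal assume y: "ereal (f \<zeta>) < y"
    show "eventually (\<lambda>x. ereal (w x) < y) (at \<zeta> within U)"
    proof (cases y)
      case (real c)
      have c0: "0 < c" using y f0[of \<zeta>] real by simp
      have nV: "\<zeta> \<notin> V" using \<zeta> VU U by (auto simp: frontier_def interior_open)
      have "eventually (\<lambda>x. w x < c) (at \<zeta> within U)"
        unfolding w_def
      proof (rule glue_ev[OF nV c0])
        assume "\<zeta> \<in> closure V"
        then have "\<zeta> \<in> frontier V" using nV V(1) by (simp add: frontier_def interior_open)
        then show "eventually (\<lambda>y. u y < c) (at \<zeta> within V)"
          using evV y real by auto
      qed
      then show ?thesis using real by simp
    next
      case PInf then show ?thesis by simp
    next
      case MInf then show ?thesis using y by simp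
    qed
  qed
  show ?thesis
    using shw bw unfolding perron_family_def w_def[symmetric] by blast
qed

lemma sub_harmonic:
  assumes V: "open V" "V \<subseteq> U" and sh: "subharmonic_on U u"
    and hc: "continuous_on V h"
    and hm: "\<And>x r. x \<in> V \<Longrightarrow> 0 < r \<Longrightarrow> cball x r \<subseteq> V \<Longrightarrow>
               (LINT t:{0..2*pi}|lborel. h (x + of_real r * cis t)) = 2*pi * h x"
  shows "subharmonic_on V (\<lambda>y. u y - h y)"
  unfolding subharmonic_on_def
proof (intro conjI V(1) ballI)
  have uscu: "usc_on U u" using sh by (simp add: subharmonic_on_def)
  show "usc_on V (\<lambda>y. u y - h y)"
    unfolding usc_on_def
  proof (intro ballI allI impI)
    fix z c assume zV: "z \<in> V" and lt: "u z - h z < c"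
    define a where "a = c - (u z - h z)"
    have a: "a > 0" using lt by (simp add: a_def)
    have "eventually (\<lambda>y. u y < u z + a/2) (at z within U)"
      using uscu zV V(2) a unfolding usc_on_def by (meson less_add_same_cancel1 half_gt_zero subsetD)
    then have e1: "eventually (\<lambda>y. u y < u z + a/2) (at z within V)"
      by (rule filter_leD[OF at_le[OF V(2)]])
    have "(h \<longlongrightarrow> h z) (at z within V)" using hc zV by (simp add: continuous_on_def)
    then have e2: "eventually (\<lambda>y. h y > h z - a/2) (at z within V)"
      by (rule order_tendstoD(1)) (use a in simp)
    show "eventually (\<lambda>y. u y - h y < c) (at z within V)"
      using e1 e2 by eventually_elim (use a_def in linarith)
  qed
next
  fix z assume zV: "z \<in> V"
  obtain r0 where r0: "r0 > 0" "cball z r0 \<subseteq> U"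
        "\<forall>r. 0 < r \<and> r < r0 \<longrightarrow> set_integrable lborel {0..2*pi} (\<lambda>t. u (z + of_real r * cis t)) \<and>
           u z \<le> (1 / (2*pi)) * (LINT t:{0..2*pi}|lborel. u (z + of_real r * cis t))"
    using sh zV V(2) unfolding subharmonic_on_def by blast
  obtain r1 where r1: "r1 > 0" "cball z r1 \<subseteq> V" using V(1) zV open_contains_cball by blast
  define r2 where "r2 = min r0 r1"
  have cb2: "cball z r2 \<subseteq> V" using r1 by (auto simp: r2_def)
  have mn: "set_integrable lborel {0..2*pi} (\<lambda>t. u (z + of_real r * cis t) - h (z + of_real r * cis t)) \<and>
        u z - h z \<le> (1 / (2*pi)) * (LINT t:{0..2*pi}|lborel. u (z + of_real r * cis t) - h (z + of_real r * cis t))"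
    if r: "0 < r" "r < r2" for r
  proof -
    have ui: "set_integrable lborel {0..2*pi} (\<lambda>t. u (z + of_real r * cis t))"
      and um: "u z \<le> (1 / (2*pi)) * (LINT t:{0..2*pi}|lborel. u (z + of_real r * cis t))"
      using r0(3) r by (auto simp: r2_def)
    have cb: "cball z r \<subseteq> V" using r r1 by (auto simp: r2_def)
    have circ: "z + of_real r * cis t \<in> V" for t using cb r by (auto simp: dist_norm norm_mult)
    have "continuous_on {0..2*pi} (\<lambda>t. h (z + of_real r * cis t))"
      unfolding cis_conv_exp
      by (rule continuous_on_compose2[OF hc]) (use circ in \<open>auto simp: cis_conv_exp intro!: continuous_intros\<close>)
    then have hi: "set_integrable lborel {0..2*pi} (\<lambda>t. h (z + of_real r * cis t))"
      by (rule borel_integrable_atLeastAtMost')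
    have hmz: "(LINT t:{0..2*pi}|lborel. h (z + of_real r * cis t)) = 2*pi * h z"
      using hm[OF zV r(1) cb] .
    have "(LINT t:{0..2*pi}|lborel. u (z + of_real r * cis t) - h (z + of_real r * cis t)) =
          (LINT t:{0..2*pi}|lborel. u (z + of_real r * cis t)) - 2*pi * h z"
      using set_integral_diff(2)[OF ui hi] hmz by simp
    then have "(1 / (2*pi)) * (LINT t:{0..2*pi}|lborel. u (z + of_real r * cis t) - h (z + of_real r * cis t)) =
          (1 / (2*pi)) * (LINT t:{0..2*pi}|lborel. u (z + of_real r * cis t)) - h z"
      by (simp add: field_simps)
    then show ?thesis using set_integral_diff(1)[OF ui hi] um by simp
  qed
  show "\<exists>r0>0. cball z r0 \<subseteq> V \<and> (\<forall>r. 0 < r \<and> r < r0 \<longrightarrow>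
           set_integrable lborel {0..2*pi} (\<lambda>t. u (z + of_real r * cis t) - h (z + of_real r * cis t)) \<and>
           u z - h z \<le> (1 / (2*pi)) * (LINT t:{0..2*pi}|lborel. u (z + of_real r * cis t) - h (z + of_real r * cis t)))"
  proof (intro exI[of _ r2] conjI allI impI)
    show "0 < r2" using r0(1) r1(1) by (simp add: r2_def)
  qed (use cb2 mn in auto)
qed

lemma mean_sum:
  fixes f :: "'i \<Rightarrow> real \<Rightarrow> real"
  assumes "finite P" "\<And>p. p \<in> P \<Longrightarrow> set_integrable lborel S (f p) \<and> (LINT t:S|lborel. f p t) = c p"
  shows "set_integrable lborel S (\<lambda>t. \<Sum>p\<in>P. f p t) \<and> (LINT t:S|lborel. (\<Sum>p\<in>P. f p t)) = (\<Sum>p\<in>P. c p)"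
  using assms
proof (induction P rule: finite_induct)
  case empty
  then show ?case by (simp add: set_integrable_def)
next
  case (insert q P)
  have IH: "set_integrable lborel S (\<lambda>t. \<Sum>p\<in>P. f p t) \<and> (LINT t:S|lborel. (\<Sum>p\<in>P. f p t)) = (\<Sum>p\<in>P. c p)"
    using insert by auto
  have q: "set_integrable lborel S (f q) \<and> (LINT t:S|lborel. f q t) = c q" using insert by auto
  show ?case using insert(1,2) IH q set_integral_add[of lborel S "f q" "\<lambda>t. \<Sum>p\<in>P. f p t"] by simp
qed

lemma log_term_mean:
  fixes p x :: complex and D L r :: real
  assumes "0 < r" "r < norm (x - p)" "D > 0"
  shows "(LINT t:{0..2*pi}|lborel. ln (D / norm (x + of_real r * cis t - p)) / L) = 2*pi * (ln (D / norm (x - p)) / L)"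
proof -
  have nz: "norm (x + of_real r * cis t - p) > 0" for t
  proof -
    have "norm (of_real r * cis t) = r" using assms by (simp add: norm_mult)
    then have "norm (x - p) - r \<le> norm (x + of_real r * cis t - p)"
      by (metis add.commute add_diff_eq norm_diff_ineq)
    then show ?thesis using assms by linarith
  qed
  have eq: "x + of_real r * cis t - p = (x - p) + of_real r * cis t" for t by simp
  have si: "set_integrable lborel {0..2*pi} (\<lambda>t. ln (norm (x + of_real r * cis t - p)))"
    and li: "(LINT t:{0..2*pi}|lborel. ln (norm (x + of_real r * cis t - p))) = 2*pi * ln (norm (x - p))"
    using log_mean[of r "x - p"] assms by (simp_all only: eq)
  have ci: "set_integrable lborel {0..2*pi} (\<lambda>t. ln D)" by (simp add: borel_integrable_atLeastAtMost')
  have "(\<lambda>t. ln (D / norm (x + of_real r * cis t - p)) / L) = (\<lambda>t. (1/L) * (ln D - ln (norm (x + of_real r * cis t - p))))"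
    using nz assms(3) by (auto simp: ln_div)
  then have "(LINT t:{0..2*pi}|lborel. ln (D / norm (x + of_real r * cis t - p)) / L) =
      (1/L) * ((LINT t:{0..2*pi}|lborel. ln D) - (LINT t:{0..2*pi}|lborel. ln (norm (x + of_real r * cis t - p))))"
    using set_integral_diff(2)[OF ci si] by simp
  also have "\<dots> = (1/L) * (2*pi * ln D - 2*pi * ln (norm (x - p)))"
    using li by (simp add: set_integral_const)
  also have "\<dots> = 2*pi * (ln (D / norm (x - p)) / L)"
    using assms by (auto simp: ln_div field_simps)
  finally show ?thesis .
qed

lemma perron_mono:
  assumes V: "open V" "bounded V" and U: "open U" "bounded U" and VU: "V \<subseteq> U" and zV: "z \<in> V"
    and f0: "\<And>\<zeta>. 0 \<le> f \<zeta>" and f1: "\<And>\<zeta>. f \<zeta> \<le> 1"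
    and fU: "\<forall>\<zeta>\<in>frontier V \<inter> U. f \<zeta> = 0"
  shows "perron V f z \<le> perron U f z"
proof (rule ccontr)
  assume "\<not> ?thesis"
  then have e: "perron V f z - perron U f z > 0" by simp
  have fV: "\<forall>\<zeta>\<in>frontier V. f \<zeta> \<le> 1" and fU1: "\<forall>\<zeta>\<in>frontier U. f \<zeta> \<le> 1" using f1 by auto
  obtain u where u: "u \<in> perron_family V f" "u z > perron V f z - (perron V f z - perron U f z)"
    using perron_props(2)[OF V f0 fV zV e] by blast
  have w: "(\<lambda>y. if y \<in> V then max (u y) 0 else 0) \<in> perron_family U f"
    by (rule glue[OF V U(1) VU f0 _ fU u(1)]) (use f1 in auto)
  have "(\<lambda>y. if y \<in> V then max (u y) 0 else 0) z \<le> perron U f z"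
    using perron_props(1)[OF U f0 fU1 _ w] zV VU by blast
  then show False using u(2) zV by simp
qed

lemma compact_shrink:
  fixes Kd :: "real \<Rightarrow> complex set"
  assumes cK: "\<And>\<delta>. \<delta> \<in> {0<..1} \<Longrightarrow> compact (Kd \<delta>)"
    and mono: "\<And>\<delta> \<delta>'. \<delta> \<in> {0<..1} \<Longrightarrow> \<delta>' \<in> {0<..1} \<Longrightarrow> \<delta> \<le> \<delta>' \<Longrightarrow> Kd \<delta> \<subseteq> Kd \<delta>'"
    and W: "open W" "(\<Inter>\<delta>\<in>{0<..1}. Kd \<delta>) \<subseteq> W"
  shows "\<exists>\<delta>1\<in>{0<..1}. Kd \<delta>1 \<subseteq> W"
proof (rule ccontr)
  assume nK: "\<not> ?thesis"
  have one: "(1::real) \<in> {0<..1}" by simp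
  define F where "F = (\<lambda>\<delta>. Kd \<delta> - W) ` {0<..1}"
  have "(Kd 1 - W) \<inter> \<Inter>F \<noteq> {}"
  proof (rule compact_imp_fip)
    show "compact (Kd 1 - W)" using cK[OF one] W(1) by (rule compact_diff)
    show "closed T" if "T \<in> F" for T
    proof -
      from that obtain \<delta> where "\<delta> \<in> {0<..1}" "T = Kd \<delta> - W" unfolding F_def by blast
      then show ?thesis using closed_Diff[OF compact_imp_closed[OF cK] W(1)] by simp
    qed
    show "(Kd 1 - W) \<inter> \<Inter>F' \<noteq> {}" if fin: "finite F'" and sub: "F' \<subseteq> F" for F'
    proof -
      obtain \<Delta> where \<Delta>: "\<Delta> \<subseteq> {0<..1}" "finite \<Delta>" "F' = (\<lambda>\<delta>. Kd \<delta> - W) ` \<Delta>"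
        using finite_subset_image[OF fin sub[unfolded F_def]] by blast
      show ?thesis
      proof (cases "\<Delta> = {}")
        case True
        then show ?thesis using nK one \<Delta>(3) by auto
      next
        case False
        define m where "m = Min \<Delta>"
        have m: "m \<in> \<Delta>" "\<And>\<delta>. \<delta> \<in> \<Delta> \<Longrightarrow> m \<le> \<delta>" using False \<Delta>(2) by (auto simp: m_def)
        have m01: "m \<in> {0<..1}" using m(1) \<Delta>(1) by blast
        obtain q where q: "q \<in> Kd m" "q \<notin> W" using nK m01 by blast
        have "q \<in> Kd 1" using mono[OF m01 one] m01 q(1) by auto
        moreover have "q \<in> Kd \<delta>" if "\<delta> \<in> \<Delta>" for \<delta>
          using mono[OF m01, of \<delta>] that \<Delta>(1) m(2)[OF that] q(1) by blast
        ultimately have "q \<in> (Kd 1 - W) \<inter> \<Inter>F'" using q(2) \<Delta>(3) by auto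
        then show ?thesis by blast
      qed
    qed
  qed
  then obtain q where q: "q \<in> Kd 1" "q \<notin> W" "\<And>\<delta>. \<delta> \<in> {0<..1} \<Longrightarrow> q \<in> Kd \<delta>"
    unfolding F_def by blast
  then have "q \<in> (\<Inter>\<delta>\<in>{0<..1}. Kd \<delta>)" by blast
  then show False using W(2) q(2) by blast
qed

lemma lower_bound:
  fixes U V Ks :: "complex set" and R D L \<eta> :: real
  assumes U: "open U" "bounded U" and V: "open V" and VU: "V \<subseteq> U" and zV: "z \<in> V"
    and UR: "U \<subseteq> ball 0 R"
    and Ks: "finite Ks" "Ks \<subseteq> ball 0 R" "Ks \<inter> V = {}"
    and D: "D = 2*R + 1" and L: "L > 0" and \<eta>: "\<eta> = D * exp (-L)"
    and frontV: "\<forall>\<zeta>\<in>frontier V \<inter> U. \<exists>p\<in>Ks. norm (\<zeta> - p) < \<eta>"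
    and f0: "\<And>\<zeta>. 0 \<le> f \<zeta>" and f1: "\<And>\<zeta>. f \<zeta> \<le> 1" and fball: "\<And>\<zeta>. \<zeta> \<in> ball 0 R \<Longrightarrow> f \<zeta> = 0"
    and u: "u \<in> perron_family U f"
  shows "u z - (\<Sum>p\<in>Ks. ln (D / norm (z - p)) / L) \<le> perron V f z"
proof -
  define h where "h = (\<lambda>w. \<Sum>p\<in>Ks. ln (D / norm (w - p)) / L)"
  have Vb: "bounded V" using VU U(2) bounded_subset by blast
  have fV: "\<forall>\<zeta>\<in>frontier V. f \<zeta> \<le> 1" and fU: "\<forall>\<zeta>\<in>frontier U. f \<zeta> \<le> 1" using f1 by auto
  have R0: "R \<ge> 0" using zV VU UR by (meson dual_order.trans mem_ball_0 norm_ge_zero order_less_imp_le subsetD)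
  have Dpos: "D > 0" using D R0 by simp
  have nd: "norm (w - p) < D" if "w \<in> ball 0 R" "p \<in> ball 0 R" for w p
  proof -
    have "norm (w - p) \<le> norm w + norm p" by (rule norm_triangle_ineq4)
    then show ?thesis using that D by simp
  qed
  have VR: "V \<subseteq> ball 0 R" using VU UR by blast
  have neq: "w \<noteq> p" if "w \<in> V" "p \<in> Ks" for w p using that Ks(3) by blast
  have term_nn: "0 \<le> ln (D / norm (w - p)) / L" if "w \<in> V" "p \<in> Ks" for w p
  proof -
    have "norm (w - p) > 0" using neq[OF that] by simp
    moreover have "norm (w - p) < D" using nd that VR Ks(2) by blast
    ultimately have "D / norm (w - p) > 1" by simp
    then show ?thesis using L ln_gt_zero by (simp add: less_imp_le)
  qed
  have hnn: "0 \<le> h w" if "w \<in> V" for w unfolding h_def using term_nn that by (simp add: sum_nonneg)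
  have hbig: "h w > 1" if w: "w \<in> V" "p \<in> Ks" "norm (w - p) < \<eta>" for w p
  proof -
    have np: "norm (w - p) > 0" using neq[OF w(1,2)] by simp
    have a1: "D / \<eta> < D / norm (w - p)" using np w(3) Dpos by (simp add: frac_less2)
    have \<eta>pos: "\<eta> > 0" using \<eta> Dpos by simp
    have a2: "D / \<eta> = exp L" using \<eta> Dpos \<eta>pos by (simp add: exp_minus field_simps)
    have "ln (exp L) < ln (D / norm (w - p))"
      using a1 a2 np Dpos by (subst ln_less_cancel_iff) auto
    then have "L < ln (D / norm (w - p))" by simp
    then have "1 < ln (D / norm (w - p)) / L" using L by simp
    also have "\<dots> \<le> h w" unfolding h_def
      by (rule member_le_sum[OF w(2)]) (use term_nn[OF w(1)] Ks(1) in auto)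
    finally show ?thesis .
  qed
  have u1: "\<forall>x\<in>U. u x \<le> 1" using family_le1[OF U fU u] .
  have shu: "subharmonic_on U u" and bu: "\<forall>\<zeta>\<in>frontier U. Limsup (at \<zeta> within U) (\<lambda>z. ereal (u z)) \<le> ereal (f \<zeta>)"
    using u by (auto simp: perron_family_def)
  have hc: "continuous_on V h" unfolding h_def
    by (intro continuous_intros) (use neq term_nn Dpos L in \<open>auto\<close>)
  have hm: "(LINT t:{0..2*pi}|lborel. h (x + of_real r * cis t)) = 2*pi * h x"
    if x: "x \<in> V" "0 < r" "cball x r \<subseteq> V" for x r
  proof -
    have "set_integrable lborel {0..2*pi} (\<lambda>t. \<Sum>p\<in>Ks. ln (D / norm (x + of_real r * cis t - p)) / L) \<and>
      (LINT t:{0..2*pi}|lborel. (\<Sum>p\<in>Ks. ln (D / norm (x + of_real r * cis t - p)) / L)) =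
      (\<Sum>p\<in>Ks. 2*pi * (ln (D / norm (x - p)) / L))"
    proof (rule mean_sum[OF Ks(1)])
      fix p assume p: "p \<in> Ks"
      have "p \<notin> cball x r" using p x(3) Ks(3) by blast
      then have rp: "r < norm (x - p)" by (simp add: dist_norm)
      have cont: "continuous_on {0..2*pi} (\<lambda>t. ln (D / norm (x + of_real r * cis t - p)) / L)"
      proof -
        have nz: "norm (x + of_real r * cis t - p) \<noteq> 0" for t
        proof -
          have "norm (of_real r * cis t) = r" using x(2) by (simp add: norm_mult)
          then have "norm (x - p) - r \<le> norm (x + of_real r * cis t - p)"
            by (metis add.commute add_diff_eq norm_diff_ineq)
          then show ?thesis using rp by linarith
        qed
        show ?thesis unfolding cis_conv_exp
          by (intro continuous_intros) (use nz Dpos L in \<open>auto simp: cis_conv_exp\<close>)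
      qed
      then show "set_integrable lborel {0..2*pi} (\<lambda>t. ln (D / norm (x + of_real r * cis t - p)) / L) \<and>
          (LINT t:{0..2*pi}|lborel. ln (D / norm (x + of_real r * cis t - p)) / L) = 2*pi * (ln (D / norm (x - p)) / L)"
        by (intro conjI borel_integrable_atLeastAtMost'[OF cont] log_term_mean[OF x(2) rp Dpos])
    qed
    then show ?thesis unfolding h_def by (simp add: sum_distrib_left)
  qed
  define v where "v = (\<lambda>y. u y - h y)"
  have shv: "subharmonic_on V v" unfolding v_def
    by (rule sub_harmonic[OF V VU shu hc hm])
  have bv: "Limsup (at \<zeta> within V) (\<lambda>z. ereal (v z)) \<le> ereal (f \<zeta>)" if \<zeta>: "\<zeta> \<in> frontier V" for \<zeta>
    unfolding Limsup_le_iff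
  proof (intro allI impI)
    fix y :: ereal assume y: "ereal (f \<zeta>) < y"
    have inV: "eventually (\<lambda>x. x \<in> V) (at \<zeta> within V)" by (simp add: eventually_at_filter)
    show "eventually (\<lambda>x. ereal (v x) < y) (at \<zeta> within V)"
    proof (cases "\<zeta> \<in> U")
      case False
      have "\<zeta> \<in> closure U" using \<zeta> closure_mono[OF VU] by (auto simp: frontier_def)
      then have fr: "\<zeta> \<in> frontier U" using False U(1) by (simp add: frontier_def interior_open)
      have "eventually (\<lambda>x. ereal (u x) < y) (at \<zeta> within U)"
        using Limsup_lessD[OF le_less_trans[OF bu[rule_format, OF fr] y]] .
      then have "eventually (\<lambda>x. ereal (u x) < y) (at \<zeta> within V)"
        by (rule filter_leD[OF at_le[OF VU]])
      then show ?thesis using inV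
      proof eventually_elim
        case (elim x)
        then have "ereal (v x) \<le> ereal (u x)" using hnn[of x] by (simp add: v_def)
        then show ?case using elim(1) by (rule le_less_trans)
      qed
    next
      case True
      then obtain p where p: "p \<in> Ks" "norm (\<zeta> - p) < \<eta>" using frontV \<zeta> by blast
      have f\<zeta>: "f \<zeta> = 0" using fball True UR by blast
      have "eventually (\<lambda>x. x \<in> ball p \<eta>) (nhds \<zeta>)"
        using p(2) by (intro eventually_nhds_in_open) (auto simp: dist_norm norm_minus_commute)
      then have "eventually (\<lambda>x. x \<in> ball p \<eta>) (at \<zeta> within V)"
        unfolding eventually_at_filter by (auto elim: eventually_mono)
      then show ?thesis using inV
      proof eventually_elim
        case (elim x)
        have "h x > 1" using hbig[OF elim(2) p(1)] elim(1) by (simp add: dist_norm norm_minus_commute)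
        moreover have "u x \<le> 1" using u1 elim(2) VU by blast
        ultimately have "v x < 0" by (simp add: v_def)
        then have "ereal (v x) < ereal (f \<zeta>)" using f\<zeta> by simp
        then show ?case using y by (rule less_trans)
      qed
    qed
  qed
  have "v \<in> perron_family V f" unfolding perron_family_def using shv bv by blast
  then have "v z \<le> perron V f z" using perron_props(1)[OF V Vb f0 fV zV] by blast
  then show ?thesis by (simp add: v_def h_def)
qed

theorem lemma4p1:
  fixes R :: real and K :: "complex set" and Kd :: "real \<Rightarrow> complex set"
  defines "\<Omega> \<equiv> ball 0 R - complex_of_real ` {-R<..-1}"
  assumes "R > 0"
    and "compact K" and "K \<subseteq> \<Omega>"
    and "dirichlet_regular_domain (\<Omega> - K)"
    and "\<And>\<delta>. \<delta> \<in> {0<..1} \<Longrightarrow> compact (Kd \<delta>) \<and> Kd \<delta> \<subseteq> \<Omega> - K"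
    and "\<And>\<delta> \<delta>'. \<delta> \<in> {0<..1} \<Longrightarrow> \<delta>' \<in> {0<..1} \<Longrightarrow> (Kd \<delta> \<subseteq> Kd \<delta>' \<longleftrightarrow> \<delta> \<le> \<delta>')"
    and "finite (\<Inter>\<delta>\<in>{0<..1}. Kd \<delta>)"
  shows "\<forall>z \<in> \<Omega> - (K \<union> (\<Inter>\<delta>\<in>{0<..1}. Kd \<delta>)).
           ((\<lambda>\<delta>. harmonic_measure z (sphere 0 R) (\<Omega> - (K \<union> Kd \<delta>)))
              \<longlongrightarrow> harmonic_measure z (sphere 0 R) (\<Omega> - K)) (at_right 0)"
proof -
  define Ks where "Ks = (\<Inter>\<delta>\<in>{0<..1}. Kd \<delta>)"
  define f :: "complex \<Rightarrow> real" where "f = indicator (sphere 0 R)"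
  have openOK: "open (\<Omega> - K)" using assms(5) by (simp add: dirichlet_regular_domain_def)
  have OR: "\<Omega> \<subseteq> ball 0 R" unfolding \<Omega>_def by blast
  have f0: "\<And>\<zeta>. 0 \<le> f \<zeta>" and f1: "\<And>\<zeta>. f \<zeta> \<le> 1" and fball: "\<And>\<zeta>. \<zeta> \<in> ball 0 R \<Longrightarrow> f \<zeta> = 0"
    by (auto simp: f_def indicator_def)
  have KdO: "\<And>\<delta>. \<delta> \<in> {0<..1} \<Longrightarrow> Kd \<delta> \<subseteq> \<Omega> - K" and cKd: "\<And>\<delta>. \<delta> \<in> {0<..1} \<Longrightarrow> compact (Kd \<delta>)"
    using assms(6) by auto
  have monoK: "\<And>\<delta> \<delta>'. \<delta> \<in> {0<..1} \<Longrightarrow> \<delta>' \<in> {0<..1} \<Longrightarrow> \<delta> \<le> \<delta>' \<Longrightarrow> Kd \<delta> \<subseteq> Kd \<delta>'"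
    using assms(7) by blast
  have finKs: "finite Ks" using assms(8) by (simp add: Ks_def)
  have KsKd: "\<And>\<delta>. \<delta> \<in> {0<..1} \<Longrightarrow> Ks \<subseteq> Kd \<delta>" by (auto simp: Ks_def)
  have one: "(1::real) \<in> {0<..1}" by simp
  have KsO: "Ks \<subseteq> \<Omega>" using KsKd[OF one] KdO[OF one] by blast
  have KsR: "Ks \<subseteq> ball 0 R" using KsO OR by blast
  show ?thesis unfolding Ks_def[symmetric]
  proof
    fix z assume z: "z \<in> \<Omega> - (K \<union> Ks)"
    define U where "U = connected_component_set (\<Omega> - K) z"
    define Ud where "Ud \<delta> = connected_component_set (\<Omega> - (K \<union> Kd \<delta>)) z" for \<delta>
    define P where "P = perron U f z"
    have hmU: "harmonic_measure z (sphere 0 R) (\<Omega> - K) = P" by (simp add: harmonic_measure_def P_def U_def f_def)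
    have hmd: "\<And>\<delta>. harmonic_measure z (sphere 0 R) (\<Omega> - (K \<union> Kd \<delta>)) = perron (Ud \<delta>) f z"
      by (simp add: harmonic_measure_def Ud_def f_def)
    have Uo: "open U" unfolding U_def by (rule open_connected_component[OF openOK])
    have UO: "U \<subseteq> \<Omega> - K" unfolding U_def by (rule connected_component_subset)
    have UR: "U \<subseteq> ball 0 R" using UO OR by blast
    have Ub: "bounded U" using bounded_subset[OF bounded_ball UR] .
    have zU: "z \<in> U" using z by (simp add: U_def)
    have fU1: "\<forall>\<zeta>\<in>frontier U. f \<zeta> \<le> 1" using f1 by blast
    obtain \<delta>0 where \<delta>0: "\<delta>0 \<in> {0<..1}" "z \<notin> Kd \<delta>0" using z by (auto simp: Ks_def)
    have Udp: "open (Ud \<delta>) \<and> Ud \<delta> \<subseteq> U \<and> z \<in> Ud \<delta> \<and> Ud \<delta> \<inter> Kd \<delta> = {} \<and>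
               (\<forall>\<zeta>\<in>frontier (Ud \<delta>) \<inter> U. \<zeta> \<in> Kd \<delta>)"
      if \<delta>: "\<delta> \<in> {0<..1}" "z \<notin> Kd \<delta>" for \<delta>
    proof -
      have eq: "\<Omega> - (K \<union> Kd \<delta>) = (\<Omega> - K) - Kd \<delta>" by blast
      have o: "open (\<Omega> - (K \<union> Kd \<delta>))" unfolding eq
        by (rule open_Diff[OF openOK compact_imp_closed[OF cKd[OF \<delta>(1)]]])
      have fr: "\<zeta> \<in> Kd \<delta>" if "\<zeta> \<in> frontier (Ud \<delta>)" "\<zeta> \<in> U" for \<zeta>
      proof (rule ccontr)
        assume "\<zeta> \<notin> Kd \<delta>"
        then have "\<zeta> \<in> \<Omega> - (K \<union> Kd \<delta>)" using that(2) UO by blast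
        moreover have "\<zeta> \<in> frontier (\<Omega> - (K \<union> Kd \<delta>))"
          using frontier_of_connected_component_subset that(1) unfolding Ud_def by blast
        ultimately show False using o by (simp add: frontier_def interior_open)
      qed
      show ?thesis
      proof (intro conjI ballI)
        show "open (Ud \<delta>)" unfolding Ud_def by (rule open_connected_component[OF o])
        show "Ud \<delta> \<subseteq> U" unfolding Ud_def U_def by (rule connected_component_mono) blast
        show "z \<in> Ud \<delta>" using z \<delta>(2) by (simp add: Ud_def)
        show "Ud \<delta> \<inter> Kd \<delta> = {}" using connected_component_subset[of "\<Omega> - (K \<union> Kd \<delta>)" z]
          unfolding Ud_def by blast
      qed (use fr in blast)
    qed
    have upper: "perron (Ud \<delta>) f z \<le> P" if \<delta>: "\<delta> \<in> {0<..1}" "z \<notin> Kd \<delta>" for \<delta>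
    proof -
      note Udp[OF \<delta>]
      then have o: "open (Ud \<delta>)" and s: "Ud \<delta> \<subseteq> U" and zz: "z \<in> Ud \<delta>" by auto
      have b: "bounded (Ud \<delta>)" using bounded_subset[OF Ub s] .
      have "\<forall>\<zeta>\<in>frontier (Ud \<delta>) \<inter> U. f \<zeta> = 0" using fball UR by blast
      then show ?thesis unfolding P_def by (rule perron_mono[OF o b Uo Ub s zz f0 f1])
    qed
    have lower: "\<exists>\<delta>2>0. \<forall>\<delta>. 0 < \<delta> \<and> \<delta> < \<delta>2 \<longrightarrow> \<delta> \<in> {0<..1} \<and> z \<notin> Kd \<delta> \<and> P - \<epsilon> < perron (Ud \<delta>) f z"
      if \<epsilon>: "\<epsilon> > 0" for \<epsilon>
    proof -
      define e where "e = \<epsilon> / 2"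
      have e: "e > 0" using \<epsilon> by (simp add: e_def)
      define D where "D = 2*R + 1"
      have Dpos: "D > 0" using assms(2) by (simp add: D_def)
      have zO: "z \<in> \<Omega>" "z \<notin> Ks" using z by auto
      have tpos: "0 \<le> ln (D / norm (z - p))" if p: "p \<in> Ks" for p
      proof -
        have "z \<noteq> p" using zO p by blast
        then have np: "norm (z - p) > 0" by simp
        have "norm (z - p) \<le> norm z + norm p" by (rule norm_triangle_ineq4)
        also have "\<dots> < D" using zO(1) OR KsR p by (force simp: D_def)
        finally have "D / norm (z - p) > 1" using np by simp
        then show ?thesis by simp
      qed
      define A where "A = (\<Sum>p\<in>Ks. ln (D / norm (z - p)))"
      have A: "A \<ge> 0" unfolding A_def using tpos by (simp add: sum_nonneg)
      define L where "L = A / e + 1"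
      have L: "L > 0" using A e by (simp add: L_def add_nonneg_pos)
      define \<eta> where "\<eta> = D * exp (-L)"
      have \<eta>: "\<eta> > 0" using Dpos by (simp add: \<eta>_def)
      have hz: "(\<Sum>p\<in>Ks. ln (D / norm (z - p)) / L) < e"
      proof -
        have "(\<Sum>p\<in>Ks. ln (D / norm (z - p)) / L) = A / L" unfolding A_def by (simp add: sum_divide_distrib)
        also have "\<dots> < e" using A e L by (simp add: L_def field_simps)
        finally show ?thesis .
      qed
      define W where "W = (\<Union>p\<in>Ks. ball p \<eta>)"
      have Wo: "open W" unfolding W_def by auto
      have KsW: "Ks \<subseteq> W" unfolding W_def using \<eta> by auto
      obtain \<delta>1 where \<delta>1: "\<delta>1 \<in> {0<..1}" "Kd \<delta>1 \<subseteq> W"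
        using compact_shrink[of Kd W, OF cKd monoK Wo] KsW unfolding Ks_def by blast
      define \<delta>2 where "\<delta>2 = min \<delta>0 \<delta>1"
      have \<delta>2: "\<delta>2 > 0" using \<delta>0 \<delta>1 by (simp add: \<delta>2_def)
      have "\<delta> \<in> {0<..1} \<and> z \<notin> Kd \<delta> \<and> P - \<epsilon> < perron (Ud \<delta>) f z" if \<delta>: "0 < \<delta>" "\<delta> < \<delta>2" for \<delta>
      proof -
        have d01: "\<delta> \<in> {0<..1}" using \<delta> \<delta>0 by (auto simp: \<delta>2_def)
        have zd: "z \<notin> Kd \<delta>" using monoK[OF d01 \<delta>0(1)] \<delta> \<delta>0(2) by (auto simp: \<delta>2_def)
        have KdW: "Kd \<delta> \<subseteq> W" using monoK[OF d01 \<delta>1(1)] \<delta> \<delta>1(2) by (auto simp: \<delta>2_def)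
        note Udp[OF d01 zd]
        then have o: "open (Ud \<delta>)" and s: "Ud \<delta> \<subseteq> U" and zz: "z \<in> Ud \<delta>" and dj: "Ud \<delta> \<inter> Kd \<delta> = {}"
          and frd: "\<forall>\<zeta>\<in>frontier (Ud \<delta>) \<inter> U. \<zeta> \<in> Kd \<delta>" by auto
        have KsV: "Ks \<inter> Ud \<delta> = {}" using KsKd[OF d01] dj by blast
        have frontV: "\<forall>\<zeta>\<in>frontier (Ud \<delta>) \<inter> U. \<exists>p\<in>Ks. norm (\<zeta> - p) < \<eta>"
        proof
          fix \<zeta> assume "\<zeta> \<in> frontier (Ud \<delta>) \<inter> U"
          then have "\<zeta> \<in> W" using frd KdW by blast
          then show "\<exists>p\<in>Ks. norm (\<zeta> - p) < \<eta>" unfolding W_def by (auto simp: dist_norm norm_minus_commute)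
        qed
        obtain u where u: "u \<in> perron_family U f" "u z > P - e"
          using perron_props(2)[OF Uo Ub f0 fU1 zU e] unfolding P_def by blast
        have "u z - (\<Sum>p\<in>Ks. ln (D / norm (z - p)) / L) \<le> perron (Ud \<delta>) f z"
          by (rule lower_bound[OF Uo Ub o s zz UR finKs KsR KsV D_def L \<eta>_def frontV f0 f1 fball u(1)])
        then have "P - \<epsilon> < perron (Ud \<delta>) f z" using u(2) hz by (simp add: e_def)
        then show ?thesis using d01 zd by blast
      qed
      then show ?thesis using \<delta>2 by blast
    qed
    show "((\<lambda>\<delta>. harmonic_measure z (sphere 0 R) (\<Omega> - (K \<union> Kd \<delta>)))
              \<longlongrightarrow> harmonic_measure z (sphere 0 R) (\<Omega> - K)) (at_right 0)"
      unfolding hmd hmU tendsto_iff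
    proof (intro allI impI)
      fix \<epsilon> :: real assume \<epsilon>: "\<epsilon> > 0"
      obtain \<delta>2 where \<delta>2: "\<delta>2 > 0" "\<forall>\<delta>. 0 < \<delta> \<and> \<delta> < \<delta>2 \<longrightarrow> \<delta> \<in> {0<..1} \<and> z \<notin> Kd \<delta> \<and> P - \<epsilon> < perron (Ud \<delta>) f z"
        using lower[OF \<epsilon>] by blast
      show "eventually (\<lambda>\<delta>. dist (perron (Ud \<delta>) f z) P < \<epsilon>) (at_right 0)"
        unfolding eventually_at_right_field
      proof (intro exI[of _ \<delta>2] conjI allI impI)
        fix \<delta> :: real assume "0 < \<delta>" "\<delta> < \<delta>2"
        then have "\<delta> \<in> {0<..1}" "z \<notin> Kd \<delta>" "P - \<epsilon> < perron (Ud \<delta>) f z" using \<delta>2(2) by auto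
        moreover have "perron (Ud \<delta>) f z \<le> P" using upper calculation(1,2) by blast
        ultimately show "dist (perron (Ud \<delta>) f z) P < \<epsilon>" by (simp add: dist_real_def abs_less_iff)
      qed (use \<delta>2(1) in simp)
    qed
  qed
qed


end
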